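(* Let $r\in(0,1)$ and let $k\geq1$ be an integer. Let $W_1,W_2,\dots$ be i.i.d.\ copies of a positive random variable $W$ (an i.i.d.\ multiplicative cascade with scale ratio $r$) such that $\log W$ is infinitely divisible with L\'evy triplet $(a,\sigma^2,\nu)$, i.e.\ with cumulant generating function $$\psi(p)=\log\mathbb{E}[W^p]=ap+\frac{\sigma^2p^2}{2}+\int\bigl(e^{px}-1-px\,\mathbf{1}_{|x|\le1}\bigr)\,\nu(dx),$$ and define the scaling exponents $\zeta_p=\psi(p)/\ln r$ and incremental exponents $\delta_p=\zeta_{p+k}-\zeta_p=(\psi(p+k)-\psi(p))/\ln r$. Say that A1 holds with $\beta\in(0,1)$ if $\delta_\infty=\lim_{p\to\infty}\delta_p$ exists and is finite and $\delta_{p+k}=(1-\beta)\delta_\infty+\beta\delta_p$ for all $p\in k\mathbb{N}_0=\{0,k,2k,\dots\}$. Assume nontrivial intermittency, i.e.\ $C=(\delta_0-\delta_\infty)/(1-\beta)>0$. Then A1 holds with $\beta\in(0,1)$ if and only if $\sigma^2=0$ and $\nu=\lambda\delta_b$ (a point mass at $b$) for some $b<0$ and $\lambda>0$. That is, among cascades with log-infinitely-divisible generator, A1 selects exactly the log-Poisson class ($\log W=a'+bN$, $N\sim\mathrm{Poisson}(\lambda)$); no other log-infinitely-divisible cascade (log-normal, log-stable, or any other) satisfies A1.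
   Context: $\ln$ denotes the natural logarithm. The L\'evy measure $\nu$ has no atom at $0$. *)

theory Defs
  imports "HOL-Probability.Probability"
begin

definition levy_measure :: "real measure \<Rightarrow> bool" where
  "levy_measure \<nu> \<longleftrightarrow> sets \<nu> = sets borel \<and> emeasure \<nu> {0} = 0 \<and>
     (\<integral>\<^sup>+ x. ennreal (min 1 (x\<^sup>2)) \<partial>\<nu>) < \<infinity>"

definition lk_integrand :: "real \<Rightarrow> real \<Rightarrow> real" where
  "lk_integrand p x = exp (p * x) - 1 - p * x * indicator {x. \<bar>x\<bar> \<le> 1} x"

text \<open>Cumulant generating function psi(p) = log E[W^p] of W with log W infinitely
  divisible with Levy triplet (a, sigma^2, nu).\<close>
definition levy_cgf :: "real \<Rightarrow> real \<Rightarrow> real measure \<Rightarrow> real \<Rightarrow> real" where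
  "levy_cgf a s2 \<nu> p = a * p + s2 * p\<^sup>2 / 2 + (\<integral> x. lk_integrand p x \<partial>\<nu>)"

definition zeta :: "real \<Rightarrow> real \<Rightarrow> real \<Rightarrow> real measure \<Rightarrow> real \<Rightarrow> real" where
  "zeta r a s2 \<nu> p = levy_cgf a s2 \<nu> p / ln r"

definition delta :: "real \<Rightarrow> nat \<Rightarrow> real \<Rightarrow> real \<Rightarrow> real measure \<Rightarrow> real \<Rightarrow> real" where
  "delta r k a s2 \<nu> p = zeta r a s2 \<nu> (p + real k) - zeta r a s2 \<nu> p"

definition A1 :: "real \<Rightarrow> nat \<Rightarrow> real \<Rightarrow> real \<Rightarrow> real measure \<Rightarrow> real \<Rightarrow> real \<Rightarrow> bool" where
  "A1 r k a s2 \<nu> \<beta> dinf \<longleftrightarrow>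
     ((delta r k a s2 \<nu>) \<longlongrightarrow> dinf) at_top \<and>
     (\<forall>n::nat. delta r k a s2 \<nu> (real (n * k) + real k)
               = (1 - \<beta>) * dinf + \<beta> * delta r k a s2 \<nu> (real (n * k)))"

end

theory Submission imports Defs begin

lemma alg:
  fixes c d e \<beta> s a k P0 P1 P2 P3 P4 L1 L2 L3 L4 D0 D1 D2 D3 :: real
  assumes "c*D0 = P1 - P0" "c*D1 = P2-P1" "c*D2 = P3-P2" "c*D3 = P4-P3"
   "D1 - d = \<beta>*(D0-d)" "D2 - d = \<beta>*(D1-d)" "D3-d=\<beta>*(D2-d)"
   "P0 = 0" "P1 = a*k + s*k^2/2 + L1" "P2 = a*(2*k) + s*(2*k)^2/2 + L2"
   "P3 = a*(3*k) + s*(3*k)^2/2 + L3" "P4 = a*(4*k) + s*(4*k)^2/2 + L4"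
  shows "L4 - (2+2*\<beta>)*L3 + (1+4*\<beta>+\<beta>^2)*L2 - (2*\<beta>+2*\<beta>^2)*L1 = - s*k^2*(1-\<beta>)^2"
    and "L2 - 2*L1 = c*(\<beta>-1)*(D0-d) - s*k^2"
  using assms by algebra+

lemma lk_meas[measurable]: "lk_integrand p \<in> borel_measurable borel"
  unfolding lk_integrand_def by measurable

lemma int_point:
  fixes f :: "real \<Rightarrow> real"
  assumes "lam \<ge> 0" "f \<in> borel_measurable borel"
  shows "integral\<^sup>L (scale_measure (ennreal lam) (return borel b)) f = lam * f b"
proof -
  have "scale_measure (ennreal lam) (return borel b) = density (return borel b) (\<lambda>_. lam)"
    by (rule measure_eqI) (auto simp: emeasure_density nn_integral_cmult_indicator)
  then show ?thesis using assms by (simp add: integral_density integral_return)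
qed

lemma backward:
  fixes r :: real and k :: nat and a :: real and \<nu> :: "real measure"
  assumes r: "0 < r" "r < 1" and k: "k \<ge> 1" and b: "b < 0" and lam: "lam > 0"
    and nu: "\<nu> = scale_measure (ennreal lam) (return borel b)"
  shows "\<exists>\<beta> dinf. 0 < \<beta> \<and> \<beta> < 1 \<and> A1 r k a 0 \<nu> \<beta> dinf \<and>
            (delta r k a 0 \<nu> 0 - dinf) / (1 - \<beta>) > 0"
proof -
  define c where "c = ln r"
  have c: "c < 0" using r by (simp add: c_def)
  define ind :: real where "ind = indicator {x::real. \<bar>x\<bar> \<le> 1} b"
  define \<beta> where "\<beta> = exp (real k * b)"
  define dinf where "dinf = (a * real k - lam * real k * b * ind) / c"
  define K where "K = lam * (\<beta> - 1) / c"
  have L: "(\<integral>x. lk_integrand p x \<partial>\<nu>) = lam * lk_integrand p b" for p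
    using lam by (simp add: nu int_point)
  have D: "delta r k a 0 \<nu> p = dinf + K * exp (p * b)" for p
    unfolding delta_def zeta_def levy_cgf_def L K_def dinf_def \<beta>_def c_def[symmetric]
      lk_integrand_def ind_def[symmetric]
    using c by (simp add: field_simps exp_add)
  have \<beta>: "0 < \<beta>" "\<beta> < 1" using b k by (auto simp: \<beta>_def mult_pos_neg)
  have lim0: "((\<lambda>p::real. exp (p * b)) \<longlongrightarrow> 0) at_top"
  proof -
    have "filterlim (\<lambda>p::real. b * p) at_bot at_top"
      using b by (intro filterlim_tendsto_neg_mult_at_bot[OF tendsto_const] filterlim_ident)
    then have "filterlim (\<lambda>p::real. p * b) at_bot at_top" by (simp add: mult.commute)
    then show ?thesis by (rule filterlim_compose[OF exp_at_bot])
  qed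
  have lim: "((delta r k a 0 \<nu>) \<longlongrightarrow> dinf) at_top"
    unfolding D using tendsto_add[OF tendsto_const tendsto_mult[OF tendsto_const lim0]] by simp
  have rec: "delta r k a 0 \<nu> (real (n * k) + real k) = (1 - \<beta>) * dinf + \<beta> * delta r k a 0 \<nu> (real (n * k))" for n
    unfolding D \<beta>_def by (simp add: algebra_simps exp_add)
  have pos: "(delta r k a 0 \<nu> 0 - dinf) / (1 - \<beta>) > 0"
  proof -
    have "c * (1 - \<beta>) < 0" using \<beta> c by (simp add: mult_neg_pos)
    then show ?thesis unfolding D K_def using \<beta> c lam by (simp add: divide_simps mult_pos_neg)
  qed
  show ?thesis using \<beta> lim rec pos unfolding A1_def by blast
qed

lemma cdelta: "ln r \<noteq> 0 \<Longrightarrow> ln r * delta r k a s \<nu> p = levy_cgf a s \<nu> (p + real k) - levy_cgf a s \<nu> p"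
  unfolding delta_def zeta_def by (simp add: field_simps)

lemma forward:
  fixes r :: real and k :: nat and a s :: real and \<nu> :: "real measure"
  assumes r: "0 < r" "r < 1" and k: "k \<ge> 1"
    and levy: "levy_measure \<nu>"
    and moments: "\<forall>p\<ge>0. integrable \<nu> (lk_integrand p)"
    and s: "s \<ge> 0"
    and \<beta>: "0 < \<beta>" "\<beta> < 1" and A: "A1 r k a s \<nu> \<beta> dinf"
    and pos: "(delta r k a s \<nu> 0 - dinf) / (1 - \<beta>) > 0"
  shows "s = 0 \<and> (\<exists>b lam. b < 0 \<and> lam > 0 \<and> \<nu> = scale_measure (ennreal lam) (return borel b))"
proof -
  define c where "c = ln r"
  have c: "c < 0" using r by (simp add: c_def)
  define K where "K = real k"
  have K: "K \<ge> 1" using k by (simp add: K_def)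
  define P where "P = levy_cgf a s \<nu>"
  define L where "L = (\<lambda>p. \<integral>x. lk_integrand p x \<partial>\<nu>)"
  define D where "D = delta r k a s \<nu>"
  have P: "P p = a * p + s * p^2 / 2 + L p" for p
    by (simp add: P_def L_def levy_cgf_def)
  have lk0: "lk_integrand 0 x = 0" for x by (simp add: lk_integrand_def)
  have L0: "L 0 = 0" proof -
    have "lk_integrand 0 = (\<lambda>x. 0)" using lk0 by auto
    then show ?thesis by (simp add: L_def)
  qed
  have cD: "c * D p = P (p + K) - P p" for p
    using cdelta[of r k a s \<nu> p] c by (simp add: c_def D_def P_def K_def)
  have rec: "D (real n * K + K) = (1 - \<beta>) * dinf + \<beta> * D (real n * K)" for n
    using A unfolding A1_def D_def K_def by simp
  have rec0: "D K = (1 - \<beta>) * dinf + \<beta> * D 0" using rec[of 0] by simp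
  have rec': "D ((real n + 1) * K) = (1 - \<beta>) * dinf + \<beta> * D (real n * K)" for n
    using rec[of n] by (simp add: distrib_right)
  have rec1: "D (2*K) = (1 - \<beta>) * dinf + \<beta> * D K" using rec'[of 1] by simp
  have rec2: "D (3*K) = (1 - \<beta>) * dinf + \<beta> * D (2*K)" using rec'[of 2] by simp
  have cD0: "c * D 0 = P K - P 0" using cD[of 0] by simp
  have f1: "K + K = 2*K" "2*K + K = 3*K" "3*K+K = 4*K" by simp_all
  have cD1: "c * D K = P (2*K) - P K" using cD[of K] unfolding f1 .
  have cD2: "c * D (2*K) = P (3*K) - P (2*K)" using cD[of "2*K"] unfolding f1 .
  have cD3: "c * D (3*K) = P (4*K) - P (3*K)" using cD[of "3*K"] unfolding f1 .
  have P0: "P 0 = 0" using P[of 0] L0 by simp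
  note alg' = alg[OF cD0 cD1 cD2 cD3 _ _ _ P0 P[of K] P[of "2*K"] P[of "3*K"] P[of "4*K"]]
  have al1: "L (4*K) - (2+2*\<beta>)*L (3*K) + (1+4*\<beta>+\<beta>^2)*L (2*K) - (2*\<beta>+2*\<beta>^2)*L K = - s*K^2*(1-\<beta>)^2"
    by (rule alg'(1)) (use rec0 rec1 rec2 in \<open>simp_all add: algebra_simps\<close>)
  have al2: "L (2*K) - 2*L K = c*(\<beta>-1)*(D 0-dinf) - s*K^2"
    by (rule alg'(2)) (use rec0 rec1 rec2 in \<open>simp_all add: algebra_simps\<close>)
  have Kx: "K \<ge> 0" using K by simp
  have I: "integrable \<nu> (lk_integrand (j * K))" if "j \<ge> 0" for j
    using moments that Kx by simp
  define f where "f = (\<lambda>x. (exp (K*x) - 1)^2 * (exp (K*x) - \<beta>)^2)"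
  define g where "g = (\<lambda>x. (exp (K*x) - 1)^2)"
  have ex: "exp (of_nat n * K * x) = exp (K * x) ^ n" for n x
    using exp_of_nat_mult[of n "K*x"] by (simp add: mult.assoc)
  have ex2: "exp (2 * K * x) = exp (K * x) ^ 2" for x using ex[of 2 x] by simp
  have ex3: "exp (3 * K * x) = exp (K * x) ^ 3" for x using ex[of 3 x] by simp
  have ex4: "exp (4 * K * x) = exp (K * x) ^ 4" for x using ex[of 4 x] by simp
  have fpt: "f x = lk_integrand (4*K) x - (2+2*\<beta>) * lk_integrand (3*K) x
      + (1+4*\<beta>+\<beta>^2) * lk_integrand (2*K) x - (2*\<beta>+2*\<beta>^2) * lk_integrand K x" for x
  proof -
    define E where "E = exp (K*x)"
    define t :: real where "t = x * indicator {x. \<bar>x\<bar> \<le> 1} x"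
    have "lk_integrand (j*K) x = exp (j*K*x) - 1 - j * K * t" for j
      by (simp add: lk_integrand_def t_def algebra_simps)
    from this[of 4] this[of 3] this[of 2] this[of 1] show ?thesis
      unfolding f_def ex2 ex3 ex4 E_def[symmetric] by (simp add: E_def[symmetric]) (simp add: power2_eq_square power3_eq_cube power4_eq_xxxx algebra_simps)
  qed
  have gpt: "g x = lk_integrand (2*K) x - 2 * lk_integrand K x" for x
  proof -
    define E where "E = exp (K*x)"
    define t :: real where "t = x * indicator {x. \<bar>x\<bar> \<le> 1} x"
    have "lk_integrand (j*K) x = exp (j*K*x) - 1 - j * K * t" for j
      by (simp add: lk_integrand_def t_def algebra_simps)
    from this[of 2] this[of 1] show ?thesis
      unfolding g_def ex2 E_def[symmetric] by (simp add: E_def[symmetric]) (simp add: power2_eq_square power3_eq_cube power4_eq_xxxx algebra_simps)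
  qed
  have I4: "integrable \<nu> (lk_integrand (4*K))" using I[of 4] by simp
  have I3: "integrable \<nu> (lk_integrand (3*K))" using I[of 3] by simp
  have I2: "integrable \<nu> (lk_integrand (2*K))" using I[of 2] by simp
  have I1: "integrable \<nu> (lk_integrand K)" using I[of 1] by simp
  have fint: "integrable \<nu> f" and fval: "integral\<^sup>L \<nu> f = - s*K^2*(1-\<beta>)^2"
  proof -
    have fe: "f = (\<lambda>x. lk_integrand (4*K) x - (2+2*\<beta>) * lk_integrand (3*K) x
      + (1+4*\<beta>+\<beta>^2) * lk_integrand (2*K) x - (2*\<beta>+2*\<beta>^2) * lk_integrand K x)"
      using fpt by auto
    show "integrable \<nu> f" unfolding fe using I1 I2 I3 I4 by simp
    show "integral\<^sup>L \<nu> f = - s*K^2*(1-\<beta>)^2" unfolding fe al1[symmetric] L_def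
      using I1 I2 I3 I4 by simp
  qed
  have gval: "integral\<^sup>L \<nu> g = c*(\<beta>-1)*(D 0-dinf) - s*K^2"
  proof -
    have ge: "g = (\<lambda>x. lk_integrand (2*K) x - 2 * lk_integrand K x)"
      using gpt by auto
    show ?thesis unfolding ge al2[symmetric] L_def using I1 I2 by simp
  qed
  have fnn: "f x \<ge> 0" for x by (simp add: f_def)
  have "integral\<^sup>L \<nu> f \<ge> 0" by (rule integral_nonneg_AE) (simp add: fnn)
  then have "s*K^2*(1-\<beta>)^2 \<le> 0" using fval by simp
  moreover have "s*K^2*(1-\<beta>)^2 \<ge> 0" using s by simp
  ultimately have "s*K^2*(1-\<beta>)^2 = 0" by linarith
  then have s0: "s = 0" using K \<beta> by simp
  then have "integral\<^sup>L \<nu> f = 0" using fval by simp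
  then have AEf: "AE x in \<nu>. f x = 0"
    using integral_nonneg_eq_0_iff_AE[OF fint] fnn by simp
  have sets: "sets \<nu> = sets borel" using levy by (simp add: levy_measure_def)
  have AE0: "AE x in \<nu>. x \<noteq> 0"
  proof (rule AE_I')
    show "{0} \<in> null_sets \<nu>" using levy sets by (simp add: levy_measure_def null_sets_def)
  qed auto
  define b where "b = ln \<beta> / K"
  have b: "b < 0" using \<beta> K by (simp add: b_def divide_neg_pos)
  have AEb: "AE x in \<nu>. x = b"
    using AEf AE0
  proof eventually_elim
    case (elim x)
    then have "exp (K*x) = 1 \<or> exp (K*x) = \<beta>" by (simp add: f_def)
    then show ?case
    proof
      assume "exp (K*x) = 1" then have "K * x = 0" by simp
      then show ?thesis using elim K by simp
    next
      assume "exp (K*x) = \<beta>" then have "K * x = ln \<beta>" by (metis ln_exp)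
      then show ?thesis using K by (simp add: b_def field_simps)
    qed
  qed
  have bsets: "{b} \<in> sets \<nu>" using sets by simp
  have fin: "emeasure \<nu> {b} \<noteq> \<infinity>"
  proof
    assume inf: "emeasure \<nu> {b} = \<infinity>"
    have mpos: "min 1 (b^2) > 0" using b by simp
    have "(\<integral>\<^sup>+ x. ennreal (min 1 (b^2)) * indicator {b} x \<partial>\<nu>) \<le> (\<integral>\<^sup>+ x. ennreal (min 1 (x\<^sup>2)) \<partial>\<nu>)"
      by (rule nn_integral_mono) (auto split: split_indicator)
    also have "\<dots> < \<infinity>" using levy by (simp add: levy_measure_def)
    finally have "ennreal (min 1 (b^2)) * emeasure \<nu> {b} < \<infinity>"
      using nn_integral_cmult_indicator[OF bsets] by simp
    then show False using inf mpos by (simp add: ennreal_mult_less_top)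
  qed
  define lam where "lam = measure \<nu> {b}"
  have lam0: "lam \<ge> 0" by (simp add: lam_def)
  have nu: "\<nu> = scale_measure (ennreal lam) (return borel b)"
  proof (rule measure_eqI)
    show "sets \<nu> = sets (scale_measure (ennreal lam) (return borel b))" using sets by simp
  next
    fix A assume A: "A \<in> sets \<nu>"
    have "emeasure \<nu> A = emeasure \<nu> (A \<inter> {b})"
      by (rule emeasure_eq_AE) (use AEb A bsets in auto)
    also have "\<dots> = ennreal lam * indicator A b"
      using fin by (cases "b \<in> A") (auto simp: lam_def emeasure_eq_ennreal_measure)
    also have "\<dots> = emeasure (scale_measure (ennreal lam) (return borel b)) A"
      using A sets by simp
    finally show "emeasure \<nu> A = emeasure (scale_measure (ennreal lam) (return borel b)) A" .
  qed
  have "D 0 - dinf > 0" using pos \<beta> by (simp add: D_def zero_less_divide_iff)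
  moreover have "c*(\<beta>-1) > 0" using c \<beta> by (simp add: mult_neg_neg)
  ultimately have "integral\<^sup>L \<nu> g > 0" using gval s0 by simp
  moreover have "integral\<^sup>L \<nu> g = lam * g b"
    unfolding nu by (rule int_point[OF lam0]) (simp add: g_def)
  ultimately have "lam \<noteq> 0" by auto
  with lam0 have "lam > 0" by simp
  with s0 b nu show ?thesis by blast
qed

theorem mainTheorem2:
  fixes r :: real and k :: nat and a \<sigma> :: real and \<nu> :: "real measure"
  assumes r: "0 < r" "r < 1"
    and k: "k \<ge> 1"
    and levy: "levy_measure \<nu>"
    and moments: "\<forall>p\<ge>0. integrable \<nu> (lk_integrand p)"
  shows "(\<exists>\<beta> dinf. 0 < \<beta> \<and> \<beta> < 1 \<and> A1 r k a (\<sigma>\<^sup>2) \<nu> \<beta> dinf \<and>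
            (delta r k a (\<sigma>\<^sup>2) \<nu> 0 - dinf) / (1 - \<beta>) > 0)
         \<longleftrightarrow> (\<sigma>\<^sup>2 = 0 \<and> (\<exists>b lam. b < 0 \<and> lam > 0 \<and>
                 \<nu> = scale_measure (ennreal lam) (return borel b)))"
proof
  assume "\<exists>\<beta> dinf. 0 < \<beta> \<and> \<beta> < 1 \<and> A1 r k a (\<sigma>\<^sup>2) \<nu> \<beta> dinf \<and>
            (delta r k a (\<sigma>\<^sup>2) \<nu> 0 - dinf) / (1 - \<beta>) > 0"
  then obtain \<beta> dinf where h: "0 < \<beta>" "\<beta> < 1" "A1 r k a (\<sigma>\<^sup>2) \<nu> \<beta> dinf"
     "(delta r k a (\<sigma>\<^sup>2) \<nu> 0 - dinf) / (1 - \<beta>) > 0" by blast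
  show "\<sigma>\<^sup>2 = 0 \<and> (\<exists>b lam. b < 0 \<and> lam > 0 \<and> \<nu> = scale_measure (ennreal lam) (return borel b))"
    by (rule forward[OF r k levy moments _ h]) simp
next
  assume h: "\<sigma>\<^sup>2 = 0 \<and> (\<exists>b lam. b < 0 \<and> lam > 0 \<and> \<nu> = scale_measure (ennreal lam) (return borel b))"
  then obtain b lam where b: "b < 0" "lam > 0" "\<nu> = scale_measure (ennreal lam) (return borel b)" by blast
  from h have s: "\<sigma>\<^sup>2 = 0" by blast
  show "\<exists>\<beta> dinf. 0 < \<beta> \<and> \<beta> < 1 \<and> A1 r k a (\<sigma>\<^sup>2) \<nu> \<beta> dinf \<and>
            (delta r k a (\<sigma>\<^sup>2) \<nu> 0 - dinf) / (1 - \<beta>) > 0"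
    unfolding s by (rule backward[OF r k b])
qed

end
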